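(* Fix a monomial order on $S$. Let $J$ be a binomial ideal of $S$ and let $(E_i)_{i\in\Lambda}$ be a family of monomial ideals of $S$. Assume that for each $i\in\Lambda$, $F_i\supseteq E_i$ is a monomial ideal such that $(J,F_i)$ is a G-nice pair and $J+E_i=J+F_i$. Then $$\bigcap_{i\in\Lambda}(J+E_i)=J+\bigcap_{i\in\Lambda}\widehat{E_i}=J+\bigcap_{i\in\Lambda}F_i,$$ where each $\widehat{E_i}$ is taken with respect to $J$.
   Context: $K$ is a field and $S=K[x_1,\ldots,x_n]$ with a fixed monomial order. For $0\neq f\in S$, $\mathrm{in}(f)$ denotes its leading monomial; for an ideal $I$, $\mathrm{in}(I)$ is the ideal generated by the leading monomials of the nonzero elements of $I$. A pair $(J,E)$ of ideals is G-nice if $\mathrm{in}(J+E)=\mathrm{in}(J)+\mathrm{in}(E)$. A binomial ideal is an ideal generated by binomials. For an ideal $J$ and a monomial ideal $E$, $\widehat E$ (the G-nice monomial closure of $E$ with respect to $J$) is the intersection of all monomial ideals $F$ of $S$ with $E\subseteq F$ and $(J,F)$ G-nice. *)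

theory Defs
  imports "HOL-Library.Poly_Mapping"
begin

text \<open>Polynomial ring S = K[x_v : v in 'n] over a field K, with 'n a finite type of variables.\<close>

type_synonym ('n, 'a) mpoly = "('n \<Rightarrow>\<^sub>0 nat) \<Rightarrow>\<^sub>0 'a"

definition monomial_order :: "(('n \<Rightarrow>\<^sub>0 nat) \<Rightarrow> ('n \<Rightarrow>\<^sub>0 nat) \<Rightarrow> bool) \<Rightarrow> bool" where
  "monomial_order le \<longleftrightarrow>
     (\<forall>a. le a a) \<and>
     (\<forall>a b. le a b \<and> le b a \<longrightarrow> a = b) \<and>
     (\<forall>a b c. le a b \<and> le b c \<longrightarrow> le a c) \<and>
     (\<forall>a b. le a b \<or> le b a) \<and>
     (\<forall>a b c. le a b \<longrightarrow> le (a + c) (b + c)) \<and>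
     (\<forall>a. le 0 a)"

definition monom :: "('n \<Rightarrow>\<^sub>0 nat) \<Rightarrow> ('n, 'a::field) mpoly" where
  "monom alpha = Poly_Mapping.single alpha 1"

definition lead_mon :: "(('n \<Rightarrow>\<^sub>0 nat) \<Rightarrow> ('n \<Rightarrow>\<^sub>0 nat) \<Rightarrow> bool) \<Rightarrow> ('n, 'a::field) mpoly \<Rightarrow> ('n \<Rightarrow>\<^sub>0 nat)" where
  "lead_mon le f = (THE m. m \<in> Poly_Mapping.keys f \<and> (\<forall>m'\<in>Poly_Mapping.keys f. le m' m))"

definition is_ideal :: "'r::comm_ring_1 set \<Rightarrow> bool" where
  "is_ideal I \<longleftrightarrow> 0 \<in> I \<and> (\<forall>x\<in>I. \<forall>y\<in>I. x + y \<in> I) \<and> (\<forall>r. \<forall>x\<in>I. r * x \<in> I)"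

definition ideal_gen :: "'r::comm_ring_1 set \<Rightarrow> 'r set" where
  "ideal_gen G = \<Inter>{I. is_ideal I \<and> G \<subseteq> I}"

definition ideal_sum :: "'r::comm_ring_1 set \<Rightarrow> 'r set \<Rightarrow> 'r set" where
  "ideal_sum I J = {x + y | x y. x \<in> I \<and> y \<in> J}"

definition init_ideal :: "(('n \<Rightarrow>\<^sub>0 nat) \<Rightarrow> ('n \<Rightarrow>\<^sub>0 nat) \<Rightarrow> bool) \<Rightarrow> ('n, 'a::field) mpoly set \<Rightarrow> ('n, 'a) mpoly set" where
  "init_ideal le I = ideal_gen {monom (lead_mon le f) | f. f \<in> I \<and> f \<noteq> 0}"

definition monomial_ideal :: "('n, 'a::field) mpoly set \<Rightarrow> bool" where
  "monomial_ideal I \<longleftrightarrow> (\<exists>A. I = ideal_gen (monom ` A))"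

definition is_binomial :: "('n, 'a::field) mpoly \<Rightarrow> bool" where
  "is_binomial f \<longleftrightarrow> card (Poly_Mapping.keys f) \<le> 2"

definition binomial_ideal :: "('n, 'a::field) mpoly set \<Rightarrow> bool" where
  "binomial_ideal I \<longleftrightarrow> (\<exists>B. (\<forall>b\<in>B. is_binomial b) \<and> I = ideal_gen B)"

definition G_nice :: "(('n \<Rightarrow>\<^sub>0 nat) \<Rightarrow> ('n \<Rightarrow>\<^sub>0 nat) \<Rightarrow> bool) \<Rightarrow> ('n, 'a::field) mpoly set \<Rightarrow> ('n, 'a) mpoly set \<Rightarrow> bool" where
  "G_nice le J E \<longleftrightarrow> init_ideal le (ideal_sum J E) = ideal_sum (init_ideal le J) (init_ideal le E)"

definition G_closure :: "(('n \<Rightarrow>\<^sub>0 nat) \<Rightarrow> ('n \<Rightarrow>\<^sub>0 nat) \<Rightarrow> bool) \<Rightarrow> ('n, 'a::field) mpoly set \<Rightarrow> ('n, 'a) mpoly set \<Rightarrow> ('n, 'a) mpoly set" where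
  "G_closure le J E = \<Inter>{F. monomial_ideal F \<and> E \<subseteq> F \<and> G_nice le J F}"

end

theory Submission imports Defs Complex_Main begin


lemma nat_incsub:
  fixes s :: "nat \<Rightarrow> nat"
  shows "\<exists>\<sigma>. strict_mono \<sigma> \<and> (\<forall>i j::nat. i \<le> j \<longrightarrow> s (\<sigma> i) \<le> s (\<sigma> j))"
proof -
  obtain f where f: "strict_mono f" "monoseq (\<lambda>n. s (f n))" using seq_monosub by blast
  show ?thesis
  proof (cases "\<forall>m n. m \<le> n \<longrightarrow> s (f m) \<le> s (f n)")
    case True then show ?thesis using f by blast
  next
    case False
    then have dec: "\<forall>m n. m \<le> n \<longrightarrow> s (f n) \<le> s (f m)" using f(2) unfolding monoseq_def by blast
    obtain N where N: "\<forall>k. s (f N) \<le> s (f k)"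
      using ex_has_least_nat[of "\<lambda>_. True" 0 "\<lambda>k. s (f k)"] by blast
    have "strict_mono (\<lambda>k. f (k + N))" using f(1) unfolding strict_mono_def by simp
    moreover have "\<forall>i j::nat. i \<le> j \<longrightarrow> s (f (i + N)) \<le> s (f (j + N))"
    proof (intro allI impI)
      fix i j :: nat assume "i \<le> j"
      have "s (f (i + N)) \<le> s (f N)" using dec by simp
      also have "\<dots> \<le> s (f (j + N))" using N by blast
      finally show "s (f (i + N)) \<le> s (f (j + N))" .
    qed
    ultimately show ?thesis by blast
  qed
qed

lemma dickson_aux:
  fixes V :: "'n set"
  assumes "finite V"
  shows "\<forall>a :: nat \<Rightarrow> ('n \<Rightarrow>\<^sub>0 nat). \<exists>\<sigma>. strict_mono \<sigma> \<and>
     (\<forall>v\<in>V. \<forall>i j::nat. i \<le> j \<longrightarrow> Poly_Mapping.lookup (a (\<sigma> i)) v \<le> Poly_Mapping.lookup (a (\<sigma> j)) v)"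
  using assms
proof (induction V rule: finite_induct)
  case empty
  then show ?case using strict_mono_id by blast
next
  case (insert v V)
  show ?case
  proof
    fix a :: "nat \<Rightarrow> ('n \<Rightarrow>\<^sub>0 nat)"
    obtain \<sigma> where s: "strict_mono \<sigma>" "\<forall>w\<in>V. \<forall>i j::nat. i \<le> j \<longrightarrow> Poly_Mapping.lookup (a (\<sigma> i)) w \<le> Poly_Mapping.lookup (a (\<sigma> j)) w"
      using insert.IH by blast
    obtain \<tau> where t: "strict_mono \<tau>" "\<forall>i j::nat. i \<le> j \<longrightarrow> Poly_Mapping.lookup (a (\<sigma> (\<tau> i))) v \<le> Poly_Mapping.lookup (a (\<sigma> (\<tau> j))) v"
      using nat_incsub[of "\<lambda>k. Poly_Mapping.lookup (a (\<sigma> k)) v"] by blast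
    have "strict_mono (\<sigma> \<circ> \<tau>)" using s(1) t(1) by (simp add: strict_mono_def)
    moreover have "\<forall>w\<in>insert v V. \<forall>i j::nat. i \<le> j \<longrightarrow> Poly_Mapping.lookup (a ((\<sigma> \<circ> \<tau>) i)) w \<le> Poly_Mapping.lookup (a ((\<sigma> \<circ> \<tau>) j)) w"
    proof (intro ballI allI impI)
      fix w i j assume w: "w \<in> insert v V" and ij: "(i::nat) \<le> j"
      have tij: "\<tau> i \<le> \<tau> j" using t(1) ij by (simp add: strict_mono_less_eq)
      show "Poly_Mapping.lookup (a ((\<sigma> \<circ> \<tau>) i)) w \<le> Poly_Mapping.lookup (a ((\<sigma> \<circ> \<tau>) j)) w"
      proof (cases "w = v")
        case True then show ?thesis using t(2) ij by simp
      next
        case False then have "w \<in> V" using w by simp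
        then show ?thesis using s(2) tij by simp
      qed
    qed
    ultimately show "\<exists>\<sigma>. strict_mono \<sigma> \<and>
     (\<forall>w\<in>insert v V. \<forall>i j::nat. i \<le> j \<longrightarrow> Poly_Mapping.lookup (a (\<sigma> i)) w \<le> Poly_Mapping.lookup (a (\<sigma> j)) w)" by blast
  qed
qed

lemma dickson:
  fixes a :: "nat \<Rightarrow> ('n::finite \<Rightarrow>\<^sub>0 nat)"
  shows "\<exists>i j. i < j \<and> (\<exists>d. a j = a i + d)"
proof -
  obtain \<sigma> where s: "strict_mono \<sigma>" "\<forall>v. \<forall>i j::nat. i \<le> j \<longrightarrow> Poly_Mapping.lookup (a (\<sigma> i)) v \<le> Poly_Mapping.lookup (a (\<sigma> j)) v"
  proof -
    have "\<exists>\<sigma>. strict_mono \<sigma> \<and> (\<forall>v\<in>(UNIV::'n set). \<forall>i j::nat. i \<le> j \<longrightarrow> Poly_Mapping.lookup (a (\<sigma> i)) v \<le> Poly_Mapping.lookup (a (\<sigma> j)) v)"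
      using dickson_aux[OF finite_UNIV] by blast
    then show ?thesis using that by blast
  qed
  have "a (\<sigma> 1) = a (\<sigma> 0) + (a (\<sigma> 1) - a (\<sigma> 0))"
    by (rule poly_mapping_eqI) (use s(2) in \<open>auto simp: lookup_add lookup_minus\<close>)
  moreover have "\<sigma> 0 < \<sigma> 1" using s(1) by (simp add: strict_mono_def)
  ultimately show ?thesis by blast
qed

definition lt_of where "lt_of le = {(x,y). le x y \<and> x \<noteq> y}"

lemma mo_wf:
  fixes le :: "('n::finite \<Rightarrow>\<^sub>0 nat) \<Rightarrow> ('n \<Rightarrow>\<^sub>0 nat) \<Rightarrow> bool"
  assumes mo: "monomial_order le"
  shows "wf (lt_of le)"
proof (unfold wf_iff_no_infinite_down_chain, rule notI)
  assume "\<exists>f. \<forall>i. (f (Suc i), f i) \<in> lt_of le"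
  then obtain f where f: "\<And>i. le (f (Suc i)) (f i)" "\<And>i. f (Suc i) \<noteq> f i" by (auto simp: lt_of_def)
  have tr: "\<And>a b c. le a b \<Longrightarrow> le b c \<Longrightarrow> le a c" and an: "\<And>a b. le a b \<Longrightarrow> le b a \<Longrightarrow> a = b"
    and rf: "\<And>a. le a a" and ad: "\<And>a b c. le a b \<Longrightarrow> le (a + c) (b + c)" and z: "\<And>a. le 0 a"
    using mo unfolding monomial_order_def by metis+
  have dec: "le (f (i + k)) (f i)" for i k
  proof (induction k)
    case 0 show ?case using rf by simp
  next
    case (Suc k) show ?case using tr[OF f(1)[of "i+k"] Suc.IH] by simp
  qed
  have strict: "f (i + Suc k) \<noteq> f i" for i k
  proof
    assume "f (i + Suc k) = f i"
    then have "le (f i) (f (Suc i))" using dec[of "Suc i" k] by simp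
    then show False using f(2)[of i] an[OF f(1)[of i]] by metis
  qed
  obtain i j d where ij: "i < j" "f j = f i + d" using dickson[of f] by blast
  have "le (0 + f i) (d + f i)" using ad z by metis
  then have "le (f i) (f j)" using ij by (simp add: add.commute)
  moreover have "le (f j) (f i)" using dec[of i "j - i"] ij by simp
  ultimately have "f j = f i" using an by blast
  then show False using strict[of i "j - i - 1"] ij by simp
qed



lemma lookup_single_mult:
  fixes g :: "('n \<Rightarrow>\<^sub>0 nat) \<Rightarrow>\<^sub>0 'a::field"
  shows "Poly_Mapping.lookup (Poly_Mapping.single d c * g) (d + x) = c * Poly_Mapping.lookup g x"
proof -
  have "Poly_Mapping.lookup (Poly_Mapping.single d c * g) (d + x)
     = (\<Sum>l. (c * (\<Sum>q. Poly_Mapping.lookup g q when d + x = l + q)) when d = l)"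
    by (simp add: lookup_mult lookup_single when_mult)
  also have "\<dots> = c * (\<Sum>q. Poly_Mapping.lookup g q when d + x = d + q)"
    by simp
  also have "(\<Sum>q. Poly_Mapping.lookup g q when d + x = d + q) = (\<Sum>q. Poly_Mapping.lookup g q when x = q)"
    by simp
  also have "\<dots> = Poly_Mapping.lookup g x" by simp
  finally show ?thesis .
qed

lemma lookup_scal:
  fixes g :: "('n \<Rightarrow>\<^sub>0 nat) \<Rightarrow>\<^sub>0 'a::field"
  shows "Poly_Mapping.lookup (Poly_Mapping.single 0 c * g) x = c * Poly_Mapping.lookup g x"
  using lookup_single_mult[of 0 c g x] by simp

lemma is_ideal_ideal_gen: "is_ideal (ideal_gen G)"
  unfolding is_ideal_def ideal_gen_def by blast

lemma ideal_gen_sub: "G \<subseteq> ideal_gen G"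
  unfolding ideal_gen_def by blast

lemma ideal_gen_min: "is_ideal I \<Longrightarrow> G \<subseteq> I \<Longrightarrow> ideal_gen G \<subseteq> I"
  unfolding ideal_gen_def by blast

lemma ideal_0: "is_ideal I \<Longrightarrow> 0 \<in> I" unfolding is_ideal_def by blast
lemma ideal_add: "is_ideal I \<Longrightarrow> x \<in> I \<Longrightarrow> y \<in> I \<Longrightarrow> x + y \<in> I" unfolding is_ideal_def by blast
lemma ideal_mult: "is_ideal I \<Longrightarrow> x \<in> I \<Longrightarrow> r * x \<in> I" unfolding is_ideal_def by blast
lemma ideal_diff: "is_ideal I \<Longrightarrow> x \<in> I \<Longrightarrow> y \<in> I \<Longrightarrow> x - y \<in> I"
proof -
  assume a: "is_ideal I" "x \<in> I" "y \<in> I"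
  have "x + (-1) * y \<in> I" using a ideal_add ideal_mult by blast
  then show ?thesis by simp
qed

lemma monom_mult: "(monom a :: ('n, 'a::field) mpoly) * monom b = monom (a + b)"
  unfolding monom_def by (simp add: mult_single)

lemma single_eq_monom: "(Poly_Mapping.single m c :: ('n, 'a::field) mpoly) = Poly_Mapping.single 0 c * monom m"
  unfolding monom_def by (simp add: mult_single)

lemma keys_monom [simp]: "Poly_Mapping.keys (monom a :: ('n, 'a::field) mpoly) = {a}"
  unfolding monom_def by simp

lemma div_lemma:
  fixes L :: "('n \<Rightarrow>\<^sub>0 nat) set"
  assumes "p \<in> ideal_gen (monom ` L :: ('n, 'a::field) mpoly set)" "k \<in> Poly_Mapping.keys p"
  shows "\<exists>l\<in>L. \<exists>d. k = l + d"
proof -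
  define I' where "I' = {p :: ('n, 'a) mpoly. \<forall>k\<in>Poly_Mapping.keys p. \<exists>l\<in>L. \<exists>d. k = l + d}"
  have i0: "0 \<in> I'" unfolding I'_def by simp
  have i1: "x + y \<in> I'" if "x \<in> I'" "y \<in> I'" for x y
    using that unfolding I'_def using keys_add[of x y] by blast
  have i2: "r * x \<in> I'" if x: "x \<in> I'" for r x
    unfolding I'_def mem_Collect_eq
  proof
    fix k assume "k \<in> Poly_Mapping.keys (r * x)"
    then obtain a b where ab: "k = a + b" "b \<in> Poly_Mapping.keys x" using keys_mult by blast
    then obtain l d where "l \<in> L" "b = l + d" using x unfolding I'_def by blast
    then show "\<exists>l\<in>L. \<exists>d. k = l + d" using ab by (metis add.left_commute)
  qed
  have "is_ideal I'" unfolding is_ideal_def using i0 i1 i2 by blast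
  moreover have "monom ` L \<subseteq> I'" unfolding I'_def by (auto intro!: exI[of _ 0])
  ultimately have "ideal_gen (monom ` L) \<subseteq> I'" by (rule ideal_gen_min)
  then show ?thesis using assms unfolding I'_def by blast
qed

lemma monom_in_gen:
  fixes L :: "('n \<Rightarrow>\<^sub>0 nat) set"
  assumes "l \<in> L"
  shows "(monom (l + d) :: ('n, 'a::field) mpoly) \<in> ideal_gen (monom ` L)"
proof -
  have "monom l \<in> ideal_gen (monom ` L :: ('n, 'a) mpoly set)" using assms ideal_gen_sub by blast
  then have "monom d * monom l \<in> ideal_gen (monom ` L :: ('n, 'a) mpoly set)"
    using ideal_mult is_ideal_ideal_gen by blast
  then show ?thesis by (simp add: monom_mult add.commute)
qed

lemma key_in_monideal:
  fixes L :: "('n \<Rightarrow>\<^sub>0 nat) set"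
  assumes "p \<in> ideal_gen (monom ` L :: ('n, 'a::field) mpoly set)" "k \<in> Poly_Mapping.keys p"
  shows "(monom k :: ('n, 'a) mpoly) \<in> ideal_gen (monom ` L)"
  using div_lemma[OF assms] monom_in_gen by blast

lemma all_keys_in:
  fixes p :: "('n, 'a::field) mpoly"
  assumes I: "is_ideal I"
  shows "(\<forall>k\<in>Poly_Mapping.keys p. monom k \<in> I) \<Longrightarrow> p \<in> I"
proof (induction "card (Poly_Mapping.keys p)" arbitrary: p)
  case 0
  then have "p = 0" by simp
  then show ?case using ideal_0[OF I] by simp
next
  case (Suc n)
  then obtain m where m: "m \<in> Poly_Mapping.keys p" by (metis card.empty emptyE nat.distinct(1) subsetI subset_empty)
  define q where "q = p - Poly_Mapping.single m (Poly_Mapping.lookup p m)"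
  have kq: "Poly_Mapping.keys q = Poly_Mapping.keys p - {m}"
    unfolding q_def by (auto simp: in_keys_iff lookup_minus lookup_single when_def split: if_splits)
  have "n = card (Poly_Mapping.keys q)" using Suc.hyps(2) kq m by simp
  moreover have "\<forall>k\<in>Poly_Mapping.keys q. monom k \<in> I" using Suc.prems kq by blast
  ultimately have "q \<in> I" using Suc.hyps(1) by blast
  moreover have "Poly_Mapping.single m (Poly_Mapping.lookup p m) \<in> I"
    using Suc.prems m single_eq_monom ideal_mult[OF I] by metis
  ultimately have "q + Poly_Mapping.single m (Poly_Mapping.lookup p m) \<in> I" using ideal_add[OF I] by blast
  then show ?case unfolding q_def by simp
qed

lemma init_ideal_form:
  "init_ideal le I = ideal_gen (monom ` {lead_mon le f | f. f \<in> I \<and> f \<noteq> 0})"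
  unfolding init_ideal_def by (rule arg_cong[where f = ideal_gen]) auto

lemma mo_max:
  assumes mo: "monomial_order le" and "finite A" "A \<noteq> {}"
  shows "\<exists>m\<in>A. \<forall>x\<in>A. le x m"
  using assms(2,3)
proof (induction A rule: finite_ne_induct)
  case (singleton x)
  have "le x x" using mo unfolding monomial_order_def by metis
  then show ?case by simp
next
  case (insert x F)
  then obtain m where m: "m \<in> F" "\<forall>y\<in>F. le y m" by blast
  have tr: "\<And>a b c. le a b \<Longrightarrow> le b c \<Longrightarrow> le a c" and tot: "\<And>a b. le a b \<or> le b a" and rf: "\<And>a. le a a"
    using mo unfolding monomial_order_def by metis+
  show ?case
  proof (cases "le x m")
    case True then show ?thesis using m by blast
  next
    case False then have "le m x" using tot by blast
    then have "\<forall>y\<in>F. le y x" using m(2) tr by metis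
    then show ?thesis using rf by simp
  qed
qed

lemma lead_mon_prop:
  fixes f :: "('n, 'a::field) mpoly"
  assumes mo: "monomial_order le" and f: "f \<noteq> 0"
  shows "lead_mon le f \<in> Poly_Mapping.keys f \<and> (\<forall>m\<in>Poly_Mapping.keys f. le m (lead_mon le f))"
proof -
  have an: "\<And>a b. le a b \<Longrightarrow> le b a \<Longrightarrow> a = b" using mo unfolding monomial_order_def by metis
  have ne: "Poly_Mapping.keys f \<noteq> {}" using f by simp
  obtain m where m: "m \<in> Poly_Mapping.keys f" "\<forall>x\<in>Poly_Mapping.keys f. le x m"
    using mo_max[OF mo finite_keys ne] by blast
  have "\<exists>!m. m \<in> Poly_Mapping.keys f \<and> (\<forall>m'\<in>Poly_Mapping.keys f. le m' m)"
    using m an by blast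
  then show ?thesis unfolding lead_mon_def by (rule theI')
qed



lemma split_sum_monom:
  fixes L1 L2 :: "('n \<Rightarrow>\<^sub>0 nat) set"
  assumes "(monom m :: ('n, 'a::field) mpoly) \<in> ideal_sum (ideal_gen (monom ` L1)) (ideal_gen (monom ` L2))"
  shows "(monom m :: ('n, 'a) mpoly) \<in> ideal_gen (monom ` L1) \<or> (monom m :: ('n, 'a) mpoly) \<in> ideal_gen (monom ` L2)"
proof -
  obtain a b where ab: "monom m = a + b" "a \<in> ideal_gen (monom ` L1 :: ('n, 'a) mpoly set)"
    "b \<in> ideal_gen (monom ` L2 :: ('n, 'a) mpoly set)"
    using assms unfolding ideal_sum_def by blast
  have "Poly_Mapping.lookup a m + Poly_Mapping.lookup b m = 1"
    using arg_cong[OF ab(1), of "\<lambda>p. Poly_Mapping.lookup p m"] by (simp add: monom_def lookup_add)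
  then have "m \<in> Poly_Mapping.keys a \<or> m \<in> Poly_Mapping.keys b" by (auto simp: in_keys_iff)
  then show ?thesis using key_in_monideal ab(2,3) by blast
qed

lemma monideal_is_ideal: "monomial_ideal F \<Longrightarrow> is_ideal F"
  unfolding monomial_ideal_def using is_ideal_ideal_gen by blast

lemma monideal_init_sub:
  fixes F :: "('n, 'a::field) mpoly set"
  assumes mo: "monomial_order le" and F: "monomial_ideal F"
  shows "init_ideal le F \<subseteq> F"
proof -
  obtain A where A: "F = ideal_gen (monom ` A)" using F unfolding monomial_ideal_def by blast
  show ?thesis unfolding init_ideal_def
  proof (rule ideal_gen_min[OF monideal_is_ideal[OF F]], rule subsetI)
    fix x :: "('n, 'a) mpoly" assume "x \<in> {monom (lead_mon le f) |f. f \<in> F \<and> f \<noteq> 0}"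
    then obtain f where f: "x = monom (lead_mon le f)" "f \<in> F" "f \<noteq> 0" by blast
    have "lead_mon le f \<in> Poly_Mapping.keys f" using lead_mon_prop[OF mo f(3)] by blast
    then show "x \<in> F" using key_in_monideal[of f A] f A by blast
  qed
qed

lemma nf_in_F:
  fixes J F :: "('n, 'a::field) mpoly set"
  assumes mo: "monomial_order le" and J: "is_ideal J" and F: "monomial_ideal F"
    and nice: "G_nice le J F"
  shows "r \<in> ideal_sum J F \<Longrightarrow> (\<forall>k\<in>Poly_Mapping.keys r. monom k \<notin> init_ideal le J) \<Longrightarrow> r \<in> F"
proof (induction "card (Poly_Mapping.keys r)" arbitrary: r)
  case 0
  then have "r = 0" by simp
  then show ?case using ideal_0[OF monideal_is_ideal[OF F]] by simp
next
  case (Suc n)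
  have FI: "is_ideal F" using monideal_is_ideal[OF F] .
  have r0: "r \<noteq> 0" using Suc.hyps(2) by auto
  define lm where "lm = lead_mon le r"
  have lmk: "lm \<in> Poly_Mapping.keys r" using lead_mon_prop[OF mo r0] lm_def by blast
  have "monom lm \<in> {monom (lead_mon le f) |f. f \<in> ideal_sum J F \<and> f \<noteq> 0}"
    unfolding lm_def using Suc.prems(1) r0 by blast
  then have "monom lm \<in> init_ideal le (ideal_sum J F)"
    unfolding init_ideal_def by (rule subsetD[OF ideal_gen_sub])
  then have "monom lm \<in> ideal_sum (init_ideal le J) (init_ideal le F)"
    using nice unfolding G_nice_def by simp
  then have "monom lm \<in> init_ideal le J \<or> monom lm \<in> init_ideal le F"
    unfolding init_ideal_form by (rule split_sum_monom)
  moreover have "monom lm \<notin> init_ideal le J" using Suc.prems(2) lmk by simp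
  ultimately have "monom lm \<in> init_ideal le F" by simp
  then have mF: "monom lm \<in> F" using monideal_init_sub[OF mo F] by (rule subsetD[rotated])
  define s where "s = Poly_Mapping.single lm (Poly_Mapping.lookup r lm)"
  have "s = Poly_Mapping.single 0 (Poly_Mapping.lookup r lm) * monom lm" unfolding s_def by (rule single_eq_monom)
  then have sF: "s \<in> F" using ideal_mult[OF FI mF] by simp
  define q where "q = r - s"
  have kq: "Poly_Mapping.keys q = Poly_Mapping.keys r - {lm}"
    unfolding q_def s_def by (auto simp: in_keys_iff lookup_minus lookup_single when_def split: if_splits)
  obtain j x where jx: "r = j + x" "j \<in> J" "x \<in> F" using Suc.prems(1) unfolding ideal_sum_def by blast
  have "q = j + (x - s)" unfolding q_def jx(1) by simp
  moreover have "x - s \<in> F" using ideal_diff[OF FI jx(3) sF] .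
  ultimately have qS: "q \<in> ideal_sum J F" unfolding ideal_sum_def using jx(2) by blast
  have "n = card (Poly_Mapping.keys q)" using Suc.hyps(2) kq lmk by simp
  moreover have "\<forall>k\<in>Poly_Mapping.keys q. monom k \<notin> init_ideal le J" using Suc.prems(2) kq by blast
  ultimately have "q \<in> F" using Suc.hyps(1) qS by blast
  then have "q + s \<in> F" using ideal_add[OF FI _ sF] by blast
  then show ?case unfolding q_def by simp
qed



lemma nf_exists:
  fixes J :: "('n::finite, 'a::field) mpoly set"
  assumes mo: "monomial_order le" and J: "is_ideal J"
  shows "\<exists>r. f - r \<in> J \<and> (\<forall>k\<in>Poly_Mapping.keys r. monom k \<notin> init_ideal le J)"
proof -
  define M where "M = {k. (monom k :: ('n, 'a) mpoly) \<in> init_ideal le J}"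
  have tr: "\<And>a b c. le a b \<Longrightarrow> le b c \<Longrightarrow> le a c" and an: "\<And>a b. le a b \<Longrightarrow> le b a \<Longrightarrow> a = b"
    and rf: "\<And>a. le a a" and ad: "\<And>a b c. le a b \<Longrightarrow> le (a + c) (b + c)"
    using mo unfolding monomial_order_def by metis+
  define P where "P m \<longleftrightarrow> (\<forall>r :: ('n, 'a) mpoly. (\<forall>k\<in>Poly_Mapping.keys r \<inter> M. le k m) \<longrightarrow>
      (\<exists>r'. r - r' \<in> J \<and> Poly_Mapping.keys r' \<inter> M = {}))" for m
  have P: "P m" for m
  proof (induct m rule: wf_induct[OF mo_wf[OF mo]])
    case (1 m)
    have H: "\<exists>r'. r - r' \<in> J \<and> Poly_Mapping.keys r' \<inter> M = {}"
      if hr: "\<forall>k\<in>Poly_Mapping.keys r \<inter> M. le k m \<and> k \<noteq> m" for r :: "('n, 'a) mpoly"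
    proof (cases "Poly_Mapping.keys r \<inter> M = {}")
      case True
      then show ?thesis using ideal_0[OF J] by (intro exI[of _ r]) simp
    next
      case False
      obtain m' where m': "m' \<in> Poly_Mapping.keys r \<inter> M" "\<forall>x\<in>Poly_Mapping.keys r \<inter> M. le x m'"
        using mo_max[OF mo _ False] by (meson finite_Int finite_keys)
      have "(m', m) \<in> lt_of le" using hr m'(1) unfolding lt_of_def by blast
      then have "P m'" using 1 by blast
      then show ?thesis using m'(2) unfolding P_def by blast
    qed
    show ?case unfolding P_def
    proof (intro allI impI)
      fix r :: "('n, 'a) mpoly"
      assume hr: "\<forall>k\<in>Poly_Mapping.keys r \<inter> M. le k m"
      show "\<exists>r'. r - r' \<in> J \<and> Poly_Mapping.keys r' \<inter> M = {}"
      proof (cases "m \<in> Poly_Mapping.keys r \<inter> M")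
        case False
        then show ?thesis using H hr by blast
      next
        case True
        define L where "L = {lead_mon le f | f. f \<in> J \<and> f \<noteq> 0}"
        have "(monom m :: ('n, 'a) mpoly) \<in> ideal_gen (monom ` L)"
          using True unfolding M_def L_def init_ideal_form by simp
        then obtain l d where ld: "l \<in> L" "m = l + d"
          using div_lemma[of "monom m" L m] by auto
        then obtain g where g: "g \<in> J" "g \<noteq> 0" "l = lead_mon le g" unfolding L_def by blast
        have lg: "l \<in> Poly_Mapping.keys g" "\<forall>b\<in>Poly_Mapping.keys g. le b l"
          using lead_mon_prop[OF mo g(2)] g(3) by auto
        define g' where "g' = Poly_Mapping.single d 1 * g"
        have g'J: "g' \<in> J" unfolding g'_def using ideal_mult[OF J g(1)] .
        have lg': "Poly_Mapping.lookup g' m = Poly_Mapping.lookup g l"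
          unfolding g'_def ld(2) using lookup_single_mult[of d 1 g l] by (simp add: add.commute)
        then have g'm: "Poly_Mapping.lookup g' m \<noteq> 0" using lg(1) by (simp add: in_keys_iff)
        have kg': "le k m" if kk: "k \<in> Poly_Mapping.keys g'" for k
        proof -
          obtain a b where ab: "k = a + b" "a \<in> Poly_Mapping.keys (Poly_Mapping.single d (1::'a))" "b \<in> Poly_Mapping.keys g"
            using kk keys_mult[of "Poly_Mapping.single d (1::'a)" g] unfolding g'_def by blast
          have "a = d" using ab(2) by simp
          then have "k = b + d" using ab(1) by (simp add: add.commute)
          moreover have "le (b + d) (l + d)" using ad lg(2) ab(3) by blast
          ultimately show ?thesis using ld(2) by simp
        qed
        define c where "c = Poly_Mapping.lookup r m / Poly_Mapping.lookup g' m"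
        define h where "h = Poly_Mapping.single 0 c * g'"
        have hJ: "h \<in> J" unfolding h_def using ideal_mult[OF J g'J] .
        define r'' where "r'' = r - h"
        have r''m: "Poly_Mapping.lookup r'' m = 0"
          unfolding r''_def h_def c_def using g'm by (simp add: lookup_minus lookup_scal)
        have kh: "Poly_Mapping.keys h \<subseteq> Poly_Mapping.keys g'"
          unfolding h_def by (auto simp: in_keys_iff lookup_scal)
        have "\<forall>k\<in>Poly_Mapping.keys r'' \<inter> M. le k m \<and> k \<noteq> m"
        proof
          fix k assume k: "k \<in> Poly_Mapping.keys r'' \<inter> M"
          then have "k \<noteq> m" using r''m by (auto simp: in_keys_iff)
          moreover have "k \<in> Poly_Mapping.keys r \<or> k \<in> Poly_Mapping.keys g'"
            using k keys_diff[of r h] kh unfolding r''_def by blast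
          then have "le k m" using hr kg' k by blast
          ultimately show "le k m \<and> k \<noteq> m" by simp
        qed
        then obtain r' where r': "r'' - r' \<in> J" "Poly_Mapping.keys r' \<inter> M = {}" using H by blast
        have "r - r' = h + (r'' - r')" unfolding r''_def by simp
        then have "r - r' \<in> J" using ideal_add[OF J hJ r'(1)] by metis
        then show ?thesis using r'(2) by blast
      qed
    qed
  qed
  show ?thesis
  proof (cases "Poly_Mapping.keys f \<inter> M = {}")
    case True
    then show ?thesis using ideal_0[OF J] unfolding M_def by (intro exI[of _ f]) auto
  next
    case False
    obtain m where m: "m \<in> Poly_Mapping.keys f \<inter> M" "\<forall>x\<in>Poly_Mapping.keys f \<inter> M. le x m"
      using mo_max[OF mo _ False] by (meson finite_Int finite_keys)
    then obtain r where "f - r \<in> J" "Poly_Mapping.keys r \<inter> M = {}" using P[of m] unfolding P_def by blast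
    then show ?thesis unfolding M_def by blast
  qed
qed



theorem mainTheorem13:
  fixes le :: "('n::finite \<Rightarrow>\<^sub>0 nat) \<Rightarrow> ('n \<Rightarrow>\<^sub>0 nat) \<Rightarrow> bool"
    and J :: "('n, 'a::field) mpoly set"
    and \<Lambda> :: "'i set"
    and E F :: "'i \<Rightarrow> ('n, 'a) mpoly set"
  assumes "monomial_order le"
    and "binomial_ideal J"
    and "\<And>i. i \<in> \<Lambda> \<Longrightarrow> monomial_ideal (E i)"
    and "\<And>i. i \<in> \<Lambda> \<Longrightarrow> monomial_ideal (F i)"
    and "\<And>i. i \<in> \<Lambda> \<Longrightarrow> E i \<subseteq> F i"
    and "\<And>i. i \<in> \<Lambda> \<Longrightarrow> G_nice le J (F i)"
    and "\<And>i. i \<in> \<Lambda> \<Longrightarrow> ideal_sum J (E i) = ideal_sum J (F i)"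
  shows "(\<Inter>i\<in>\<Lambda>. ideal_sum J (E i)) = ideal_sum J (\<Inter>i\<in>\<Lambda>. G_closure le J (E i))
    \<and> ideal_sum J (\<Inter>i\<in>\<Lambda>. G_closure le J (E i)) = ideal_sum J (\<Inter>i\<in>\<Lambda>. F i)"
proof -
  note mo = assms(1)
  obtain B where "J = ideal_gen B" using assms(2) unfolding binomial_ideal_def by blast
  then have JI: "is_ideal J" using is_ideal_ideal_gen by simp
  have GF: "G_closure le J (E i) \<subseteq> F i" if i: "i \<in> \<Lambda>" for i
    unfolding G_closure_def using assms(4,5,6)[OF i] by (intro Inter_lower) simp
  have AB: "(\<Inter>i\<in>\<Lambda>. ideal_sum J (E i)) \<subseteq> ideal_sum J (\<Inter>i\<in>\<Lambda>. G_closure le J (E i))"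
  proof
    fix x assume x: "x \<in> (\<Inter>i\<in>\<Lambda>. ideal_sum J (E i))"
    obtain r where r: "x - r \<in> J" "\<forall>k\<in>Poly_Mapping.keys r. monom k \<notin> init_ideal le J"
      using nf_exists[OF mo JI, of x] by blast
    have "r \<in> G_closure le J (E i)" if i: "i \<in> \<Lambda>" for i
      unfolding G_closure_def
    proof (rule InterI)
      fix F' assume "F' \<in> {F'. monomial_ideal F' \<and> E i \<subseteq> F' \<and> G_nice le J F'}"
      then have F': "monomial_ideal F'" "E i \<subseteq> F'" "G_nice le J F'" by auto
      obtain j e where je: "x = j + e" "j \<in> J" "e \<in> E i" using x i unfolding ideal_sum_def by blast
      have "r = (j - (x - r)) + e" using je(1) by simp
      moreover have "j - (x - r) \<in> J" using ideal_diff[OF JI je(2) r(1)] .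
      ultimately have "r \<in> ideal_sum J F'" unfolding ideal_sum_def using je(3) F'(2) by blast
      then show "r \<in> F'" using nf_in_F[OF mo JI F'(1) F'(3)] r(2) by blast
    qed
    then have "r \<in> (\<Inter>i\<in>\<Lambda>. G_closure le J (E i))" by blast
    moreover have "x = (x - r) + r" by simp
    ultimately show "x \<in> ideal_sum J (\<Inter>i\<in>\<Lambda>. G_closure le J (E i))"
      unfolding ideal_sum_def using r(1) by blast
  qed
  have BC: "ideal_sum J (\<Inter>i\<in>\<Lambda>. G_closure le J (E i)) \<subseteq> ideal_sum J (\<Inter>i\<in>\<Lambda>. F i)"
  proof
    fix x assume "x \<in> ideal_sum J (\<Inter>i\<in>\<Lambda>. G_closure le J (E i))"
    then obtain j y where "x = j + y" "j \<in> J" "y \<in> (\<Inter>i\<in>\<Lambda>. G_closure le J (E i))"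
      unfolding ideal_sum_def by blast
    moreover have "y \<in> (\<Inter>i\<in>\<Lambda>. F i)" using calculation(3) GF by blast
    ultimately show "x \<in> ideal_sum J (\<Inter>i\<in>\<Lambda>. F i)" unfolding ideal_sum_def by blast
  qed
  have CA: "ideal_sum J (\<Inter>i\<in>\<Lambda>. F i) \<subseteq> (\<Inter>i\<in>\<Lambda>. ideal_sum J (E i))"
  proof
    fix x assume "x \<in> ideal_sum J (\<Inter>i\<in>\<Lambda>. F i)"
    then obtain j y where jy: "x = j + y" "j \<in> J" "y \<in> (\<Inter>i\<in>\<Lambda>. F i)"
      unfolding ideal_sum_def by blast
    have "x \<in> ideal_sum J (E i)" if i: "i \<in> \<Lambda>" for i
    proof -
      have "x \<in> ideal_sum J (F i)" unfolding ideal_sum_def using jy i by blast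
      then show ?thesis using assms(7)[OF i] by simp
    qed
    then show "x \<in> (\<Inter>i\<in>\<Lambda>. ideal_sum J (E i))" by blast
  qed
  show ?thesis using AB BC CA by blast
qed


end
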